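(* Let $F$ be a sensori-computational device and $N\subseteq Y(F)$ such that every nonempty string $s_1s_2\cdots s_k\in\mathcal{L}(F)$ has $s_1\in Y(F)\setminus N$. Then there exists a sensori-computational device that output simulates $F$ modulo the $N$-pump $P_N$ if and only if there exists a sensori-computational device that output simulates $F$ modulo the $N$-shrink $\pi_N$ (both taken with $L=\mathcal{L}(F)$, $\Sigma=Y(F)$).
   Context: A sensori-computational device is a 6-tuple $F=(V,V_0,Y,\tau,C,c)$ where $V$ is a non-empty finite set of states, $V_0\subseteq V$ a non-empty set of initial states, $Y=Y(F)$ a finite set of observations, $\tau:V\times V\to\mathcal{P}(Y)$, $C$ a set of outputs, $c:V\to\mathcal{P}(C)\setminus\{\emptyset\}$. A string $y_1\cdots y_n$ reaches $w$ from $v$ if there are states $w_0=v,\dots,w_n=w$ with $y_i\in\tau(w_{i-1},w_i)$; $\mathcal{R}_F(s)$ is the set of states reached by $s$ from some initial state; $\mathcal{L}(F)=\{s\in Y^*:\mathcal{R}_F(s)\ne\emptyset\}$; $\mathcal{C}_F(s)=\bigcup_{v\in\mathcal{R}_F(s)}c(v)$. For a relation $R\subseteq A\times B$ between sets of strings, $F'$ output simulates $F$ modulo $R$ if for every $s\in\mathcal{L}(F)$: (1) some $t\in\mathcal{L}(F')$ has $s\,R\,t$; (2) every $t\in B$ with $s\,R\,t$ satisfies $t\in\mathcal{L}(F')$ and $\mathcal{C}_F(s)\supseteq\mathcal{C}_{F'}(t)$. For a set $\Sigma$, $L\subseteq\Sigma^*$ and $N\subseteq\Sigma$: the $N$-shrink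 is the function $\pi_N:L\to(\Sigma\setminus N)^*$ deleting every occurrence of symbols of $N$ from a string (so $\pi_N(\epsilon)=\epsilon$). The $N$-pump is the relation $P_N\subseteq L\times\Sigma^*$ defined as the smallest relation such that $\epsilon\,P_N\,\epsilon$, $s\,P_N\,s$ for every $s\in L$, and whenever $s\,P_N\,t_1\cdots t_\ell$, then $s\,P_N\,t_1\cdots t_k\,b\,t_{k+1}\cdots t_\ell$ for every $b\in N$ and $k\in\{1,\dots,\ell\}$. *)

theory Defs
  imports Main
begin

text \<open>A sensori-computational device F = (V, V0, Y, tau, C, c).
  State type 'v, observation type 'y, output type 'c.\<close>
record ('v, 'y, 'c) scd =
  states :: "'v set"
  init   :: "'v set"
  obs    :: "'y set"
  trans  :: "'v \<Rightarrow> 'v \<Rightarrow> 'y set"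
  outs   :: "'c set"
  outf   :: "'v \<Rightarrow> 'c set"

definition scd_wf :: "('v, 'y, 'c) scd \<Rightarrow> bool" where
  "scd_wf F \<longleftrightarrow>
     finite (states F) \<and> states F \<noteq> {} \<and>
     init F \<subseteq> states F \<and> init F \<noteq> {} \<and>
     finite (obs F) \<and>
     (\<forall>v\<in>states F. \<forall>w\<in>states F. trans F v w \<subseteq> obs F) \<and>
     (\<forall>v\<in>states F. outf F v \<subseteq> outs F \<and> outf F v \<noteq> {})"

fun reaches :: "('v, 'y, 'c) scd \<Rightarrow> 'v \<Rightarrow> 'y list \<Rightarrow> 'v \<Rightarrow> bool" where
  "reaches F v [] w \<longleftrightarrow> v = w"
| "reaches F v (y # s) w \<longleftrightarrow> (\<exists>u\<in>states F. y \<in> trans F v u \<and> reaches F u s w)"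

definition reached :: "('v, 'y, 'c) scd \<Rightarrow> 'y list \<Rightarrow> 'v set" where
  "reached F s = {w \<in> states F. \<exists>v\<in>init F. reaches F v s w}"

definition lang :: "('v, 'y, 'c) scd \<Rightarrow> 'y list set" where
  "lang F = {s. set s \<subseteq> obs F \<and> reached F s \<noteq> {}}"

definition outputs :: "('v, 'y, 'c) scd \<Rightarrow> 'y list \<Rightarrow> 'c set" where
  "outputs F s = (\<Union>v\<in>reached F s. outf F v)"

definition output_simulates ::
  "('w, 'y, 'c) scd \<Rightarrow> ('v, 'y, 'c) scd \<Rightarrow> ('y list \<Rightarrow> 'y list \<Rightarrow> bool) \<Rightarrow> bool" where
  "output_simulates F' F R \<longleftrightarrow>
     (\<forall>s\<in>lang F. (\<exists>t\<in>lang F'. R s t) \<and>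
                 (\<forall>t. R s t \<longrightarrow> t \<in> lang F' \<and> outputs F' t \<subseteq> outputs F s))"

text \<open>The N-shrink on L, as a relation (graph of the function).\<close>
definition shrink :: "'y list set \<Rightarrow> 'y set \<Rightarrow> 'y list \<Rightarrow> 'y list \<Rightarrow> bool" where
  "shrink L N s t \<longleftrightarrow> s \<in> L \<and> t = filter (\<lambda>x. x \<notin> N) s"

inductive pump :: "'y list set \<Rightarrow> 'y set \<Rightarrow> 'y list \<Rightarrow> 'y list \<Rightarrow> bool"
  for L :: "'y list set" and N :: "'y set" where
  pump_eps: "pump L N [] []"
| pump_refl: "s \<in> L \<Longrightarrow> pump L N s s"
| pump_ins: "pump L N s t \<Longrightarrow> b \<in> N \<Longrightarrow> 1 \<le> k \<Longrightarrow> k \<le> length t \<Longrightarrow>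
             pump L N s (take k t @ b # drop k t)"

end

theory Submission
  imports Defs
begin

lemma reaches_append:
  "reaches F v (s @ u) w \<longleftrightarrow> (\<exists>m. reaches F v s m \<and> reaches F m u w)"
  by (induction s arbitrary: v) auto

lemma reaches_in_states:
  "reaches F v s w \<Longrightarrow> s \<noteq> [] \<Longrightarrow> w \<in> states F"
proof (induction s arbitrary: v)
  case Nil then show ?case by simp
next
  case (Cons y s)
  then obtain u where "u \<in> states F" "reaches F u s w" by auto
  then show ?case using Cons by (cases s) auto
qed

lemma reaches_obs:
  "scd_wf F \<Longrightarrow> v \<in> states F \<Longrightarrow> reaches F v s w \<Longrightarrow> set s \<subseteq> obs F"
  by (induction s arbitrary: v) (auto simp: scd_wf_def, blast)

lemma reached_sub: "reached F s \<subseteq> states F"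
  unfolding reached_def by auto

lemma lang_iff: "scd_wf F \<Longrightarrow> s \<in> lang F \<longleftrightarrow> reached F s \<noteq> {}"
  unfolding lang_def reached_def scd_wf_def
  using reaches_obs[of F] by (auto simp: scd_wf_def)

lemma outputs_ne: "scd_wf F \<Longrightarrow> s \<in> lang F \<Longrightarrow> outputs F s \<noteq> {}"
  using lang_iff[of F s] reached_sub[of F s] unfolding outputs_def scd_wf_def by blast

definition transp :: "('v \<Rightarrow> 'w) \<Rightarrow> ('v,'y,'c) scd \<Rightarrow> ('w,'y,'c) scd" where
 "transp f G = \<lparr>states = f ` states G, init = f ` init G, obs = obs G,
    trans = (\<lambda>a b. trans G (inv_into (states G) f a) (inv_into (states G) f b)),
    outs = outs G, outf = (\<lambda>a. outf G (inv_into (states G) f a))\<rparr>"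

lemma transp_reaches:
  assumes "inj_on f (states G)" "v \<in> states G" "w \<in> states G"
  shows "reaches (transp f G) (f v) s (f w) \<longleftrightarrow> reaches G v s w"
  using assms(2)
proof (induction s arbitrary: v)
  case Nil then show ?case using assms by (auto simp: inj_on_eq_iff)
next
  case (Cons y s)
  show ?case using Cons assms(1) by (auto simp: transp_def)
qed

lemma transp_reached:
  assumes "inj_on f (states G)" "init G \<subseteq> states G"
  shows "reached (transp f G) s = f ` reached G s"
proof -
  have "reached (transp f G) s = {w' \<in> f ` states G. \<exists>v'\<in> f ` init G. reaches (transp f G) v' s w'}"
    unfolding reached_def by (simp add: transp_def)
  also have "\<dots> = f ` reached G s"
  proof (rule set_eqI, rule iffI)
    fix x assume "x \<in> {w' \<in> f ` states G. \<exists>v'\<in> f ` init G. reaches (transp f G) v' s w'}"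
    then obtain w v where "w \<in> states G" "v \<in> init G" "x = f w" "reaches (transp f G) (f v) s (f w)"
      by auto
    then show "x \<in> f ` reached G s" unfolding reached_def
      using transp_reaches[OF assms(1)] assms(2) by blast
  next
    fix x assume "x \<in> f ` reached G s"
    then obtain w v where "w \<in> states G" "v \<in> init G" "x = f w" "reaches G v s w"
      unfolding reached_def by auto
    then show "x \<in> {w' \<in> f ` states G. \<exists>v'\<in> f ` init G. reaches (transp f G) v' s w'}"
      using transp_reaches[OF assms(1)] assms(2) by blast
  qed
  finally show ?thesis .
qed

lemma transp_wf:
  assumes "scd_wf G" "inj_on f (states G)"
  shows "scd_wf (transp f G)"
  using assms unfolding scd_wf_def transp_def by (auto simp: inv_into_f_f)

lemma transp_lang:
  assumes "scd_wf G" "inj_on f (states G)"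
  shows "lang (transp f G) = lang G"
  using transp_reached[OF assms(2)] assms(1) unfolding lang_def scd_wf_def
  by (auto simp: transp_def)

lemma transp_outputs:
  assumes "scd_wf G" "inj_on f (states G)"
  shows "outputs (transp f G) s = outputs G s"
proof -
  have ig: "init G \<subseteq> states G" using assms(1) unfolding scd_wf_def by auto
  have "outputs (transp f G) s = (\<Union>v\<in>f ` reached G s. outf G (inv_into (states G) f v))"
    unfolding outputs_def transp_reached[OF assms(2) ig] by (simp add: transp_def)
  also have "\<dots> = (\<Union>w\<in>reached G s. outf G w)"
    using reached_sub[of G s] inv_into_f_f[OF assms(2)] by (auto simp: subset_iff)
  finally show ?thesis unfolding outputs_def .
qed

lemma to_nat:
  fixes G :: "('v,'y,'c) scd"
  assumes "scd_wf G" "output_simulates G F R"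
  shows "\<exists>G' :: (nat,'y,'c) scd. scd_wf G' \<and> output_simulates G' F R"
proof -
  have "finite (states G)" using assms(1) unfolding scd_wf_def by simp
  then obtain f :: "'v \<Rightarrow> nat" and n where f: "inj_on f (states G)"
    using finite_imp_inj_to_nat_seg[of "states G"] by auto
  have l: "lang (transp f G) = lang G" using transp_lang[OF assms(1) f] .
  have o: "\<And>s. outputs (transp f G) s = outputs G s" using transp_outputs[OF assms(1) f] .
  have "output_simulates (transp f G) F R"
    using assms(2) unfolding output_simulates_def l o .
  then show ?thesis using transp_wf[OF assms(1) f] by blast
qed

definition loopify :: "'y set \<Rightarrow> ('v,'y,'c) scd \<Rightarrow> ('v,'y,'c) scd" where
  "loopify N G = G\<lparr>trans := (\<lambda>v w. (trans G v w - N) \<union> (if v = w then N else {})),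
                    obs := obs G \<union> N\<rparr>"

lemma loopify_reaches:
  "v \<in> states G \<Longrightarrow> reaches (loopify N G) v t w \<longleftrightarrow> reaches G v (filter (\<lambda>x. x \<notin> N) t) w"
proof (induction t arbitrary: v)
  case Nil then show ?case by simp
next
  case (Cons y t)
  have sel: "trans (loopify N G) = (\<lambda>v w. (trans G v w - N) \<union> (if v = w then N else {}))"
    "states (loopify N G) = states G" by (simp_all add: loopify_def)
  show ?case
  proof (cases "y \<in> N")
    case True
    have "reaches (loopify N G) v (y # t) w \<longleftrightarrow>
        (\<exists>u\<in>states G. y \<in> (trans G v u - N) \<union> (if v = u then N else {}) \<and> reaches (loopify N G) u t w)"
      by (simp only: reaches.simps sel)
    also have "\<dots> \<longleftrightarrow> reaches (loopify N G) v t w" using True Cons.prems by auto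
    also have "\<dots> \<longleftrightarrow> reaches G v (filter (\<lambda>x. x \<notin> N) (y # t)) w" using True Cons by simp
    finally show ?thesis .
  next
    case False
    have "reaches (loopify N G) v (y # t) w \<longleftrightarrow>
        (\<exists>u\<in>states G. y \<in> (trans G v u - N) \<union> (if v = u then N else {}) \<and> reaches (loopify N G) u t w)"
      by (simp only: reaches.simps sel)
    also have "\<dots> \<longleftrightarrow> (\<exists>u\<in>states G. y \<in> trans G v u \<and> reaches G u (filter (\<lambda>x. x \<notin> N) t) w)"
    proof (rule bex_cong[OF refl])
      fix u assume u: "u \<in> states G"
      have "y \<in> (trans G v u - N) \<union> (if v = u then N else {}) \<longleftrightarrow> y \<in> trans G v u"
        using False by auto
      then show "y \<in> (trans G v u - N) \<union> (if v = u then N else {}) \<and> reaches (loopify N G) u t w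
        \<longleftrightarrow> y \<in> trans G v u \<and> reaches G u (filter (\<lambda>x. x \<notin> N) t) w"
        using Cons.IH[OF u] by simp
    qed
    also have "\<dots> \<longleftrightarrow> reaches G v (filter (\<lambda>x. x \<notin> N) (y # t)) w" using False by simp
    finally show ?thesis .
  qed
qed

lemma loopify_reached:
  "init G \<subseteq> states G \<Longrightarrow> reached (loopify N G) t = reached G (filter (\<lambda>x. x \<notin> N) t)"
  unfolding reached_def using loopify_reaches[of _ G N t]
  by (auto simp: loopify_def)

lemma pump_shrink: "pump L N s t \<Longrightarrow> filter (\<lambda>x. x \<notin> N) t = filter (\<lambda>x. x \<notin> N) s"
proof (induction rule: pump.induct)
  case (pump_ins s t b k)
  have "filter (\<lambda>x. x \<notin> N) (take k t @ b # drop k t)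
      = filter (\<lambda>x. x \<notin> N) (take k t) @ filter (\<lambda>x. x \<notin> N) (drop k t)"
    using pump_ins by simp
  also have "\<dots> = filter (\<lambda>x. x \<notin> N) t" by (metis filter_append append_take_drop_id)
  finally show ?case using pump_ins by simp
qed auto

lemma backward:
  assumes wfF: "scd_wf F" and NF: "N \<subseteq> obs F"
    and G: "scd_wf G" "output_simulates G F (shrink (lang F) N)"
  shows "scd_wf (loopify N G) \<and> output_simulates (loopify N G) F (pump (lang F) N)"
proof
  have fN: "finite N" using NF wfF finite_subset unfolding scd_wf_def by blast
  show "scd_wf (loopify N G)" using G(1) fN unfolding scd_wf_def loopify_def by auto
  have ig: "init G \<subseteq> states G" using G(1) unfolding scd_wf_def by auto
  have key: "t \<in> lang (loopify N G) \<and> outputs (loopify N G) t \<subseteq> outputs F s"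
    if s: "s \<in> lang F" and pt: "pump (lang F) N s t" for s t
  proof -
    have sh: "shrink (lang F) N s (filter (\<lambda>x. x \<notin> N) s)" using s by (simp add: shrink_def)
    then have l: "filter (\<lambda>x. x \<notin> N) s \<in> lang G"
      and o: "outputs G (filter (\<lambda>x. x \<notin> N) s) \<subseteq> outputs F s"
      using G(2) s unfolding output_simulates_def by blast+
    have eq: "filter (\<lambda>x. x \<notin> N) t = filter (\<lambda>x. x \<notin> N) s" using pump_shrink[OF pt] .
    have "set t \<subseteq> set (filter (\<lambda>x. x \<notin> N) t) \<union> N" by auto
    then have "set t \<subseteq> obs G \<union> N" using l eq unfolding lang_def by auto
    then have "t \<in> lang (loopify N G)" using l eq loopify_reached[OF ig, of N t]
      unfolding lang_def by (auto simp: loopify_def)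
    moreover have "outputs (loopify N G) t = outputs G (filter (\<lambda>x. x \<notin> N) s)"
      using loopify_reached[OF ig, of N t] eq unfolding outputs_def by (simp add: loopify_def)
    ultimately show ?thesis using o by simp
  qed
  show "output_simulates (loopify N G) F (pump (lang F) N)"
    unfolding output_simulates_def using key pump.pump_refl by blast
qed


inductive anyins :: "'y set \<Rightarrow> 'y list \<Rightarrow> 'y list \<Rightarrow> bool" for N where
  ai_nil: "set w \<subseteq> N \<Longrightarrow> anyins N [] w"
| ai_cons: "set w \<subseteq> N \<Longrightarrow> anyins N u u' \<Longrightarrow> anyins N (x # u) (w @ x # u')"

lemma ai_cons0: "anyins N u u' \<Longrightarrow> anyins N (x # u) (x # u')"
  using ai_cons[of "[]" N u u' x] by simp

lemma anyins_refl: "anyins N u u"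
proof (induction u)
  case Nil show ?case using ai_nil[of "[]" N] by simp
next
  case (Cons x u) then show ?case by (rule ai_cons0)
qed

lemma anyins_app: "anyins N c u \<Longrightarrow> anyins N (p @ c) (p @ u)"
proof (induction p)
  case Nil then show ?case by simp
next
  case (Cons x p) then show ?case using ai_cons0 by simp
qed

lemma anyins_consN: "anyins N c u \<Longrightarrow> x \<in> N \<Longrightarrow> anyins N c (x # u)"
proof (induction rule: anyins.cases)
  case (ai_nil w) then show ?case using anyins.ai_nil[of "x # w" N] by simp
next
  case (ai_cons w u u' y)
  then show ?case using anyins.ai_cons[of "x # w" N u u' y] by simp
qed

lemma common_ins:
  "filter (\<lambda>x. x \<notin> N) a = filter (\<lambda>x. x \<notin> N) c \<Longrightarrow> \<exists>u. anyins N a u \<and> anyins N c u"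
proof (induction a arbitrary: c)
  case Nil
  then have "filter (\<lambda>x. x \<notin> N) c = []" by simp
  then have "\<forall>x\<in>set c. x \<in> N" by (simp add: filter_empty_conv)
  then have "set c \<subseteq> N" by blast
  then have "anyins N [] c" by (rule ai_nil)
  moreover have "anyins N c c" by (rule anyins_refl)
  ultimately show ?case by blast
next
  case (Cons x a')
  show ?case
  proof (cases "x \<in> N")
    case True
    then have "filter (\<lambda>x. x \<notin> N) a' = filter (\<lambda>x. x \<notin> N) c" using Cons.prems by simp
    then obtain u0 where u0: "anyins N a' u0" "anyins N c u0" using Cons.IH by blast
    have "anyins N (x # a') (x # u0)" using u0(1) by (rule ai_cons0)
    moreover have "anyins N c (x # u0)" using u0(2) True by (rule anyins_consN)
    ultimately show ?thesis by blast
  next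
    case False
    then have "filter (\<lambda>x. x \<notin> N) c = x # filter (\<lambda>x. x \<notin> N) a'" using Cons.prems by simp
    then obtain w c' where c: "c = w @ x # c'" "\<forall>z\<in>set w. z \<in> N"
        "filter (\<lambda>x. x \<notin> N) a' = filter (\<lambda>x. x \<notin> N) c'"
      unfolding filter_eq_Cons_iff by auto
    then obtain u0 where u0: "anyins N a' u0" "anyins N c' u0" using Cons.IH by blast
    have w: "set w \<subseteq> N" using c(2) by blast
    have "anyins N (x # a') (w @ x # u0)" using ai_cons[OF w u0(1)] .
    moreover have "anyins N c (w @ x # u0)" using anyins_app[OF u0(2), of "w @ [x]"] c(1) by simp
    ultimately show ?thesis by blast
  qed
qed

lemma pump_appN:
  "p \<noteq> [] \<Longrightarrow> pump L N s (p @ r) \<Longrightarrow> set w \<subseteq> N \<Longrightarrow> pump L N s (p @ w @ r)"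
proof (induction w arbitrary: p)
  case Nil then show ?case by simp
next
  case (Cons b w)
  have "pump L N s (take (length p) (p @ r) @ b # drop (length p) (p @ r))"
  proof (rule pump_ins)
    show "pump L N s (p @ r)" "b \<in> N" using Cons.prems by auto
    show "1 \<le> length p" using Cons.prems(1) by (cases p) auto
    show "length p \<le> length (p @ r)" by simp
  qed
  then have "pump L N s ((p @ [b]) @ r)" by simp
  then have "pump L N s ((p @ [b]) @ w @ r)" using Cons.IH[of "p @ [b]"] Cons.prems by simp
  then show ?case by simp
qed

lemma pump_anyins:
  "anyins N u u' \<Longrightarrow> p \<noteq> [] \<Longrightarrow> pump L N s (p @ u) \<Longrightarrow> pump L N s (p @ u')"
proof (induction arbitrary: p rule: anyins.induct)
  case (ai_nil w)
  then show ?case using pump_appN[of p L N s "[]" w] by simp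
next
  case (ai_cons w u u' x)
  have "pump L N s (p @ w @ x # u)" using pump_appN ai_cons by blast
  then have "pump L N s ((p @ w @ [x]) @ u)" by simp
  then have "pump L N s ((p @ w @ [x]) @ u')" using ai_cons.IH[of "p @ w @ [x]"] by simp
  then show ?case by simp
qed


definition PS :: "('v,'y,'c) scd \<Rightarrow> 'v set \<Rightarrow> 'y list \<Rightarrow> 'v set" where
  "PS F R s = {w \<in> states F. \<exists>v\<in>R. reaches F v s w}"

definition Dl :: "('v,'y,'c) scd \<Rightarrow> 'y set \<Rightarrow> 'v set set \<Rightarrow> 'y \<Rightarrow> 'v set set" where
  "Dl F N X y = {PS F R (y # w) | R w. R \<in> X \<and> set w \<subseteq> N \<and> PS F R (y # w) \<noteq> {}}"

definition Dt :: "('v,'y,'c) scd \<Rightarrow> 'y set \<Rightarrow> 'y list \<Rightarrow> 'v set set" where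
  "Dt F N t = foldl (Dl F N) {init F} t"

definition Iout :: "('v,'y,'c) scd \<Rightarrow> 'v set set \<Rightarrow> 'c set" where
  "Iout F X = (\<Inter>R\<in>X. \<Union>v\<in>R. outf F v)"

definition F0 :: "('v,'y,'c) scd \<Rightarrow> 'y set \<Rightarrow> ('v set set,'y,'c) scd" where
  "F0 F N = \<lparr>states = Pow (Pow (states F)), init = {{init F}}, obs = obs F - N,
     trans = (\<lambda>X Y. {y \<in> obs F - N. Y = Dl F N X y}), outs = UNIV,
     outf = (\<lambda>X. if Iout F X \<noteq> {} then Iout F X else UNIV)\<rparr>"

lemma PS_append:
  assumes "R \<subseteq> states F"
  shows "PS F R (s @ u) = PS F (PS F R s) u"
proof (rule set_eqI, rule iffI)
  fix w assume "w \<in> PS F R (s @ u)"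
  then obtain v m where "w \<in> states F" "v \<in> R" "reaches F v s m" "reaches F m u w"
    unfolding PS_def reaches_append by auto
  moreover have "m \<in> states F"
  proof (cases "s = []")
    case True then show ?thesis using calculation assms by auto
  next
    case False then show ?thesis using calculation reaches_in_states by metis
  qed
  ultimately show "w \<in> PS F (PS F R s) u" unfolding PS_def by auto
next
  fix w assume "w \<in> PS F (PS F R s) u"
  then show "w \<in> PS F R (s @ u)" unfolding PS_def reaches_append by auto
qed

lemma reached_PS: "reached F s = PS F (init F) s"
  unfolding reached_def PS_def by simp

lemma Dl_sub: "Dl F N X y \<subseteq> Pow (states F)"
proof
  fix R assume "R \<in> Dl F N X y"
  then obtain R0 w where "R = PS F R0 (y # w)" unfolding Dl_def by blast
  then show "R \<in> Pow (states F)" unfolding PS_def by blast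
qed

lemma Dt_snoc: "Dt F N (t @ [y]) = Dl F N (Dt F N t) y"
  unfolding Dt_def by simp

lemma Dt_in: "init F \<subseteq> states F \<Longrightarrow> Dt F N t \<in> Pow (Pow (states F))"
proof (induction t rule: rev_induct)
  case Nil then show ?case by (simp add: Dt_def)
next
  case (snoc x xs) then show ?case using Dl_sub[of F N "Dt F N xs" x] by (simp add: Dt_snoc)
qed

lemma F0_sel:
  "states (F0 F N) = Pow (Pow (states F))" "init (F0 F N) = {{init F}}"
  "obs (F0 F N) = obs F - N" "trans (F0 F N) X Y = {y \<in> obs F - N. Y = Dl F N X y}"
  "outs (F0 F N) = UNIV" "outf (F0 F N) X = (if Iout F X \<noteq> {} then Iout F X else UNIV)"
  by (simp_all add: F0_def)

lemma F0_reaches: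
  "X \<in> Pow (Pow (states F)) \<Longrightarrow>
   reaches (F0 F N) X t Y \<longleftrightarrow> set t \<subseteq> obs F - N \<and> Y = foldl (Dl F N) X t"
proof (induction t arbitrary: X)
  case Nil
  show ?case
  proof
    assume "reaches (F0 F N) X [] Y"
    then have "X = Y" by simp
    then show "set [] \<subseteq> obs F - N \<and> Y = foldl (Dl F N) X []" by simp
  next
    assume "set [] \<subseteq> obs F - N \<and> Y = foldl (Dl F N) X []"
    then show "reaches (F0 F N) X [] Y" by simp
  qed
next
  case (Cons y t)
  have D: "Dl F N X y \<in> Pow (Pow (states F))" using Dl_sub[of F N X y] by simp
  have "reaches (F0 F N) X (y # t) Y \<longleftrightarrow> y \<in> obs F - N \<and> reaches (F0 F N) (Dl F N X y) t Y"
    unfolding reaches.simps F0_sel mem_Collect_eq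
  proof
    assume "\<exists>U\<in>Pow (Pow (states F)). (y \<in> obs F - N \<and> U = Dl F N X y) \<and> reaches (F0 F N) U t Y"
    then show "y \<in> obs F - N \<and> reaches (F0 F N) (Dl F N X y) t Y" by blast
  next
    assume "y \<in> obs F - N \<and> reaches (F0 F N) (Dl F N X y) t Y"
    then show "\<exists>U\<in>Pow (Pow (states F)). (y \<in> obs F - N \<and> U = Dl F N X y) \<and> reaches (F0 F N) U t Y"
      using D by blast
  qed
  then show ?case using Cons.IH[OF D] by simp
qed

lemma F0_reached:
  assumes "init F \<subseteq> states F"
  shows "reached (F0 F N) t = (if set t \<subseteq> obs F - N then {Dt F N t} else {})"
proof -
  have i: "{init F} \<in> Pow (Pow (states F))" using assms by auto
  have "reached (F0 F N) t = {Y \<in> Pow (Pow (states F)). reaches (F0 F N) {init F} t Y}"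
    unfolding reached_def F0_sel by simp
  also have "\<dots> = {Y \<in> Pow (Pow (states F)). set t \<subseteq> obs F - N \<and> Y = Dt F N t}"
    using F0_reaches[OF i, of N t] unfolding Dt_def by blast
  also have "\<dots> = (if set t \<subseteq> obs F - N then {Dt F N t} else {})"
    using Dt_in[OF assms, of N t] by (cases "set t \<subseteq> obs F - N") (simp_all, blast)
  finally show ?thesis .
qed


lemma reached_nil: "init F \<subseteq> states F \<Longrightarrow> reached F [] = init F"
  unfolding reached_def by auto

lemma PS_empty: "PS F {} s = {}"
  unfolding PS_def by simp

lemma Dt_b:
  assumes wf: "scd_wf F"
  shows "set t \<inter> N = {} \<Longrightarrow> R \<in> Dt F N t \<Longrightarrow>
         \<exists>s. reached F s = R \<and> R \<noteq> {} \<and> filter (\<lambda>x. x \<notin> N) s = t"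
proof (induction t arbitrary: R rule: rev_induct)
  case Nil
  have ig: "init F \<subseteq> states F" "init F \<noteq> {}" using wf unfolding scd_wf_def by auto
  have "R = init F" using Nil.prems by (simp add: Dt_def)
  then show ?case using reached_nil[OF ig(1)] ig(2) by (intro exI[of _ "[]"]) simp
next
  case (snoc y t)
  have ig: "init F \<subseteq> states F" using wf unfolding scd_wf_def by auto
  have yN: "y \<notin> N" and tN: "set t \<inter> N = {}" using snoc.prems(1) by auto
  have "R \<in> Dl F N (Dt F N t) y" using snoc.prems(2) by (simp add: Dt_snoc)
  then obtain R0 w where R: "R = PS F R0 (y # w)" "R0 \<in> Dt F N t" "set w \<subseteq> N" "R \<noteq> {}"
    unfolding Dl_def by blast
  obtain s0 where s0: "reached F s0 = R0" "filter (\<lambda>x. x \<notin> N) s0 = t"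
    using snoc.IH[OF tN R(2)] by blast
  have "reached F (s0 @ y # w) = PS F (PS F (init F) s0) (y # w)"
    unfolding reached_PS using PS_append[OF ig] by blast
  also have "\<dots> = R" using s0(1) R(1) by (simp add: reached_PS)
  finally have "reached F (s0 @ y # w) = R" .
  moreover have "filter (\<lambda>x. x \<notin> N) w = []" using R(3) by (auto simp: filter_empty_conv)
  then have "filter (\<lambda>x. x \<notin> N) (s0 @ y # w) = t @ [y]" using s0(2) yN by simp
  ultimately show ?case using R(4) by blast
qed

lemma reached_snoc:
  assumes "init F \<subseteq> states F"
  shows "reached F (s @ [x]) = PS F (reached F s) [x]"
  unfolding reached_PS using PS_append[OF assms] by blast

lemma Dt_a:
  assumes wf: "scd_wf F"
    and A3: "\<forall>s\<in>lang F. s \<noteq> [] \<longrightarrow> hd s \<in> obs F - N"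
  shows "s \<in> lang F \<Longrightarrow> reached F s \<in> Dt F N (filter (\<lambda>x. x \<notin> N) s)"
proof (induction s rule: rev_induct)
  case Nil
  have ig: "init F \<subseteq> states F" using wf unfolding scd_wf_def by auto
  show ?case using reached_nil[OF ig] by (simp add: Dt_def)
next
  case (snoc x s')
  have ig: "init F \<subseteq> states F" using wf unfolding scd_wf_def by auto
  have rs: "reached F (s' @ [x]) = PS F (reached F s') [x]" by (rule reached_snoc[OF ig])
  have ne: "reached F (s' @ [x]) \<noteq> {}" using snoc.prems lang_iff[OF wf] by blast
  then have "reached F s' \<noteq> {}" using rs PS_empty by metis
  then have s'L: "s' \<in> lang F" using lang_iff[OF wf] by blast
  note IH = snoc.IH[OF s'L]
  show ?case
  proof (cases "x \<in> N")
    case False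
    have "PS F (reached F s') (x # []) \<in> Dl F N (Dt F N (filter (\<lambda>x. x \<notin> N) s')) x"
      unfolding Dl_def using IH ne rs by fastforce
    then show ?thesis using False rs by (simp add: Dt_snoc)
  next
    case True
    have "s' \<noteq> []"
    proof
      assume "s' = []"
      then have "[x] \<in> lang F" using snoc.prems by simp
      then show False using A3 True by fastforce
    qed
    then have "hd s' \<notin> N" using A3 s'L by blast
    then have "filter (\<lambda>x. x \<notin> N) s' \<noteq> []" using \<open>s' \<noteq> []\<close> by (cases s') auto
    then obtain t0 y where t0: "filter (\<lambda>x. x \<notin> N) s' = t0 @ [y]" by (metis rev_exhaust)
    have "reached F s' \<in> Dl F N (Dt F N t0) y" using IH t0 by (simp add: Dt_snoc)
    then obtain R0 w where R: "reached F s' = PS F R0 (y # w)" "R0 \<in> Dt F N t0" "set w \<subseteq> N"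
      unfolding Dl_def by blast
    have R0s: "R0 \<subseteq> states F" using Dt_in[OF ig, of N t0] R(2) by blast
    have "reached F (s' @ [x]) = PS F R0 ((y # w) @ [x])"
      using rs R(1) PS_append[OF R0s, of "y # w" "[x]"] by simp
    then have "reached F (s' @ [x]) = PS F R0 (y # (w @ [x]))" by simp
    moreover have "set (w @ [x]) \<subseteq> N" using R(3) True by simp
    ultimately have "reached F (s' @ [x]) \<in> Dl F N (Dt F N t0) y"
      unfolding Dl_def using R(2) ne by blast
    then show ?thesis using True t0 by (simp add: Dt_snoc)
  qed
qed


lemma Iout_sub:
  assumes wf: "scd_wf F" and A3: "\<forall>s\<in>lang F. s \<noteq> [] \<longrightarrow> hd s \<in> obs F - N"
    and s: "s \<in> lang F"
  shows "Iout F (Dt F N (filter (\<lambda>x. x \<notin> N) s)) \<subseteq> outputs F s"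
  using Dt_a[OF wf A3 s] unfolding Iout_def outputs_def by blast

lemma sim_pump_ne:
  assumes wf': "scd_wf F'" and sim: "output_simulates F' F (pump (lang F) N)"
    and s: "s \<in> lang F" and p: "pump (lang F) N s t"
  shows "t \<in> lang F'" "outputs F' t \<subseteq> outputs F s" "outputs F' t \<noteq> {}"
proof -
  show "t \<in> lang F'" "outputs F' t \<subseteq> outputs F s"
    using sim s p unfolding output_simulates_def by blast+
  then show "outputs F' t \<noteq> {}" using outputs_ne[OF wf'] by blast
qed

lemma Iout_ne:
  assumes wf: "scd_wf F" and A3: "\<forall>s\<in>lang F. s \<noteq> [] \<longrightarrow> hd s \<in> obs F - N"
    and wf': "scd_wf F'" and sim: "output_simulates F' F (pump (lang F) N)"
    and s: "s \<in> lang F"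
  shows "Iout F (Dt F N (filter (\<lambda>x. x \<notin> N) s)) \<noteq> {}"
proof (cases s)
  case Nil
  have ig: "init F \<subseteq> states F" using wf unfolding scd_wf_def by auto
  have nl: "[] \<in> lang F" using s Nil by simp
  have "pump (lang F) N [] []" by (rule pump_eps)
  note sp = sim_pump_ne[OF wf' sim nl this]
  have "Iout F (Dt F N (filter (\<lambda>x. x \<notin> N) s)) = outputs F []"
    using Nil reached_nil[OF ig] unfolding Iout_def outputs_def Dt_def by simp
  then show ?thesis using sp(2,3) by blast
next
  case (Cons x a)
  define P where "P = (\<lambda>x. x \<notin> N)"
  have ig: "init F \<subseteq> states F" using wf unfolding scd_wf_def by auto
  have xN: "x \<notin> N" using A3 s Cons by auto
  have fs: "filter P s = x # filter P a" using Cons xN by (simp add: P_def)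
  define D where "D = Dt F N (filter P s)"
  have decomp: "\<exists>c. x # c \<in> lang F \<and> reached F (x # c) = R \<and> filter P c = filter P a"
    if R: "R \<in> D" for R
  proof -
    have "set (filter P s) \<inter> N = {}" by (auto simp: P_def)
    then obtain s' where s': "reached F s' = R" "R \<noteq> {}" "filter P s' = filter P s"
      using Dt_b[OF wf _ R[unfolded D_def]] unfolding P_def by blast
    have s'L: "s' \<in> lang F" using lang_iff[OF wf] s'(1,2) by blast
    have "s' \<noteq> []" using s'(3) fs by auto
    then obtain x' c where c: "s' = x' # c" by (cases s') auto
    have "x' \<notin> N" using A3 s'L c by auto
    then have "x' # filter P c = x # filter P a" using s'(3) fs c by (simp add: P_def)
    then show ?thesis using c s'L s'(1) by auto
  qed
  have Dsub: "D \<subseteq> Pow (states F)" using Dt_in[OF ig, of N "filter P s"] unfolding D_def by blast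
  have fD: "finite D" using Dsub wf unfolding scd_wf_def by (meson finite_Pow_iff finite_subset)
  have neD: "D \<noteq> {}" using Dt_a[OF wf A3 s] unfolding D_def P_def by blast
  have claim: "\<exists>u. \<forall>R\<in>X. \<exists>s'\<in>lang F. reached F s' = R \<and> filter P s' = filter P s \<and> pump (lang F) N s' (x # u)"
    if "finite X" "X \<noteq> {}" "X \<subseteq> D" for X
    using that
  proof (induction X rule: finite_ne_induct)
    case (singleton R)
    then obtain c where c: "x # c \<in> lang F" "reached F (x # c) = R" "filter P c = filter P a"
      using decomp by blast
    have "pump (lang F) N (x # c) (x # c)" using c(1) by (rule pump_refl)
    moreover have "filter P (x # c) = filter P s" using fs xN c(3) by (simp add: P_def)
    ultimately show ?case using c by blast
  next
    case (insert R X)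
    obtain u where u: "\<forall>R\<in>X. \<exists>s'\<in>lang F. reached F s' = R \<and> filter P s' = filter P s \<and> pump (lang F) N s' (x # u)"
      using insert by blast
    obtain R1 where "R1 \<in> X" using insert(2) by blast
    then obtain s1 where s1: "s1 \<in> lang F" "reached F s1 = R1" "filter P s1 = filter P s" "pump (lang F) N s1 (x # u)"
      using u by blast
    obtain c where c: "x # c \<in> lang F" "reached F (x # c) = R" "filter P c = filter P a"
      using decomp insert.prems by blast
    have "filter P (x # u) = filter P s1" using pump_shrink[OF s1(4)] unfolding P_def .
    then have "x # filter P u = x # filter P a" using s1(3) fs xN by (simp add: P_def)
    then have fu: "filter P u = filter P c" using c(3) by simp
    have fc: "filter P (x # c) = filter P s" using fs xN c(3) by (simp add: P_def)
    obtain u2 where u2: "anyins N c u2" "anyins N u u2"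
      using common_ins[of N c u] fu unfolding P_def by metis
    have "pump (lang F) N (x # c) ([x] @ c)" using c(1) pump_refl by simp
    then have pc: "pump (lang F) N (x # c) (x # u2)"
      using pump_anyins[OF u2(1), of "[x]"] by simp
    have "\<forall>R'\<in>X. \<exists>s'\<in>lang F. reached F s' = R' \<and> filter P s' = filter P s \<and> pump (lang F) N s' (x # u2)"
    proof
      fix R' assume "R' \<in> X"
      then obtain s' where "s' \<in> lang F" "reached F s' = R'" "filter P s' = filter P s" "pump (lang F) N s' ([x] @ u)"
        using u by auto
      then show "\<exists>s'\<in>lang F. reached F s' = R' \<and> filter P s' = filter P s \<and> pump (lang F) N s' (x # u2)"
        using pump_anyins[OF u2(2), of "[x]"] by auto
    qed
    then show ?case using pc c fc by blast
  qed
  obtain u where u: "\<forall>R\<in>D. \<exists>s'\<in>lang F. reached F s' = R \<and> filter P s' = filter P s \<and> pump (lang F) N s' (x # u)"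
    using claim[OF fD neD subset_refl] by blast
  obtain R0 where "R0 \<in> D" using neD by blast
  then obtain s0 where s0: "s0 \<in> lang F" "pump (lang F) N s0 (x # u)" using u by blast
  have ne': "outputs F' (x # u) \<noteq> {}" using sim_pump_ne[OF wf' sim s0] by blast
  have "outputs F' (x # u) \<subseteq> Iout F D"
    unfolding Iout_def
  proof (rule INT_greatest)
    fix R assume "R \<in> D"
    then obtain s' where s': "s' \<in> lang F" "reached F s' = R" "pump (lang F) N s' (x # u)"
      using u by blast
    have "outputs F' (x # u) \<subseteq> outputs F s'" using sim_pump_ne[OF wf' sim s'(1,3)] by blast
    then show "outputs F' (x # u) \<subseteq> (\<Union>v\<in>R. outf F v)" using s'(2) unfolding outputs_def by simp
  qed
  then show ?thesis using ne' unfolding D_def P_def by blast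
qed


lemma F0_wf:
  assumes wf: "scd_wf F"
  shows "scd_wf (F0 F N)"
proof -
  have fV: "finite (states F)" and ig: "init F \<subseteq> states F" and fo: "finite (obs F)"
    using wf unfolding scd_wf_def by auto
  have "finite (states (F0 F N))" using fV by (simp add: F0_sel)
  moreover have "states (F0 F N) \<noteq> {}" by (auto simp: F0_sel)
  moreover have "init (F0 F N) \<subseteq> states (F0 F N)" using ig by (auto simp: F0_sel)
  moreover have "init (F0 F N) \<noteq> {}" by (simp add: F0_sel)
  moreover have "finite (obs (F0 F N))" using fo by (simp add: F0_sel)
  moreover have "\<forall>v\<in>states (F0 F N). \<forall>w\<in>states (F0 F N). trans (F0 F N) v w \<subseteq> obs (F0 F N)"
    by (auto simp: F0_sel)
  moreover have "\<forall>v\<in>states (F0 F N). outf (F0 F N) v \<subseteq> outs (F0 F N) \<and> outf (F0 F N) v \<noteq> {}"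
    by (simp add: F0_sel)
  ultimately show ?thesis unfolding scd_wf_def by blast
qed

lemma forward:
  assumes wf: "scd_wf F" and A3: "\<forall>s\<in>lang F. s \<noteq> [] \<longrightarrow> hd s \<in> obs F - N"
    and wf': "scd_wf F'" and sim: "output_simulates F' F (pump (lang F) N)"
  shows "output_simulates (F0 F N) F (shrink (lang F) N)"
  unfolding output_simulates_def
proof
  fix s assume s: "s \<in> lang F"
  define t where "t = filter (\<lambda>x. x \<notin> N) s"
  have ig: "init F \<subseteq> states F" using wf unfolding scd_wf_def by auto
  have "set s \<subseteq> obs F" using s unfolding lang_def by simp
  then have st: "set t \<subseteq> obs F - N" unfolding t_def by auto
  have rt: "reached (F0 F N) t = {Dt F N t}" using F0_reached[OF ig, of N t] st by simp
  have tl: "t \<in> lang (F0 F N)" unfolding lang_def using st rt by (simp add: F0_sel)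
  have "outputs (F0 F N) t = outf (F0 F N) (Dt F N t)" using rt unfolding outputs_def by simp
  also have "\<dots> = Iout F (Dt F N t)"
    using Iout_ne[OF wf A3 wf' sim s] unfolding t_def by (simp add: F0_sel)
  finally have "outputs (F0 F N) t \<subseteq> outputs F s" using Iout_sub[OF wf A3 s] unfolding t_def by simp
  moreover have "shrink (lang F) N s t" using s unfolding shrink_def t_def by simp
  ultimately show "(\<exists>t\<in>lang (F0 F N). shrink (lang F) N s t) \<and>
         (\<forall>t. shrink (lang F) N s t \<longrightarrow> t \<in> lang (F0 F N) \<and> outputs (F0 F N) t \<subseteq> outputs F s)"
    using tl unfolding shrink_def t_def by blast
qed

theorem theorem3:
  fixes F :: "('v, 'y, 'c) scd" and N :: "'y set"
  assumes "scd_wf F"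
    and "N \<subseteq> obs F"
    and "\<forall>s\<in>lang F. s \<noteq> [] \<longrightarrow> hd s \<in> obs F - N"
  shows "(\<exists>F' :: (nat, 'y, 'c) scd. scd_wf F' \<and> output_simulates F' F (pump (lang F) N))
     \<longleftrightarrow> (\<exists>F' :: (nat, 'y, 'c) scd. scd_wf F' \<and> output_simulates F' F (shrink (lang F) N))"
proof
  assume "\<exists>F' :: (nat, 'y, 'c) scd. scd_wf F' \<and> output_simulates F' F (pump (lang F) N)"
  then obtain F' :: "(nat, 'y, 'c) scd" where F': "scd_wf F'" "output_simulates F' F (pump (lang F) N)"
    by blast
  have "scd_wf (F0 F N)" using F0_wf[OF assms(1)] .
  moreover have "output_simulates (F0 F N) F (shrink (lang F) N)"
    using forward[OF assms(1) assms(3) F'] .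
  ultimately show "\<exists>F' :: (nat, 'y, 'c) scd. scd_wf F' \<and> output_simulates F' F (shrink (lang F) N)"
    by (rule to_nat)
next
  assume "\<exists>F' :: (nat, 'y, 'c) scd. scd_wf F' \<and> output_simulates F' F (shrink (lang F) N)"
  then obtain G :: "(nat, 'y, 'c) scd" where G: "scd_wf G" "output_simulates G F (shrink (lang F) N)"
    by blast
  show "\<exists>F' :: (nat, 'y, 'c) scd. scd_wf F' \<and> output_simulates F' F (pump (lang F) N)"
    using backward[OF assms(1) assms(2) G] by blast
qed

end
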